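(* Let $w$ be a word over $\Omega$ of length $k$. Then $\{ i \in \{1,\dots,k-1\} : b_i = 1\} = \{ i : [i] = s\} \cup (I \setminus \{s\})$.
   Context: A word of length $k$ is written $w = w_k \dots w_1$. For $1\le i\le k$, $b_i = 1$ if $w_j = w_{k-i+j}$ for all $j=1,\dots,i$, else $b_i=0$. $s = \max\{j \in\{1,\dots,k-1\}: b_j = 1\}$, or $0$ if none. For $1 \le i \le k-1$ with $b_i=1$, $[i] = \max\{ j \in \{1,\dots,k-1\} : b_j=1 \text{ and } i = k - t(k-j) \text{ for some integer } 1 \le t \le \lfloor k/(k-j)\rfloor\}$; $I = \{[i] : 1\le i \le k-1,\ b_i=1\}$. *)

theory Defs
  imports Main
begin

text \<open>A word w = w_k ... w_1 of length k over an alphabet is modelled as a map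
  w :: nat => 'a together with its length k; only the letters w 1, ..., w k matter.
  (The alphabet Omega is the type 'a.)\<close>

definition bflag :: "(nat \<Rightarrow> 'a) \<Rightarrow> nat \<Rightarrow> nat \<Rightarrow> bool" where
  "bflag w k i \<longleftrightarrow> (\<forall>j \<in> {1..i}. w j = w (k - i + j))"

definition sval :: "(nat \<Rightarrow> 'a) \<Rightarrow> nat \<Rightarrow> nat" where
  "sval w k = (if \<exists>j \<in> {1..k-1}. bflag w k j
               then Max {j \<in> {1..k-1}. bflag w k j} else 0)"

definition cls :: "(nat \<Rightarrow> 'a) \<Rightarrow> nat \<Rightarrow> nat \<Rightarrow> nat" where
  "cls w k i = Max {j \<in> {1..k-1}. bflag w k j \<and>
      (\<exists>t::nat. 1 \<le> t \<and> t \<le> k div (k - j) \<and> int i = int k - int t * (int k - int j))}"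

definition Iset :: "(nat \<Rightarrow> 'a) \<Rightarrow> nat \<Rightarrow> nat set" where
  "Iset w k = {cls w k i | i. i \<in> {1..k-1} \<and> bflag w k i}"

end

theory Submission
  imports Defs
begin

definition per :: "(nat \<Rightarrow> 'a) \<Rightarrow> nat \<Rightarrow> nat \<Rightarrow> bool" where
  "per w k p \<longleftrightarrow> (\<forall>x. 1 \<le> x \<longrightarrow> x + p \<le> k \<longrightarrow> w x = w (x + p))"

lemma bflag_per: "i \<le> k \<Longrightarrow> bflag w k i \<longleftrightarrow> per w k (k - i)"
  unfolding bflag_def per_def
proof (intro iffI allI impI ballI)
  fix x assume a: "\<forall>j\<in>{1..i}. w j = w (k - i + j)" "i \<le> k" "1 \<le> x" "x + (k - i) \<le> k"
  then have "x \<in> {1..i}" by auto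
  with a show "w x = w (x + (k - i))" by (simp add: add.commute)
next
  fix j assume a: "\<forall>x. 1 \<le> x \<longrightarrow> x + (k - i) \<le> k \<longrightarrow> w x = w (x + (k - i))" "i \<le> k" "j \<in> {1..i}"
  then have "w j = w (j + (k - i))" by auto
  then show "w j = w (k - i + j)" by (simp add: add.commute)
qed

lemma perD: "per w k p \<Longrightarrow> 1 \<le> x \<Longrightarrow> x + p \<le> k \<Longrightarrow> w x = w (x + p)"
  unfolding per_def by blast

lemma per_sub:
  assumes p: "per w k p" and q: "per w k q" and "q < p" "p + q \<le> k"
  shows "per w k (p - q)"
  unfolding per_def
proof (intro allI impI)
  fix x assume x: "1 \<le> x" "x + (p - q) \<le> k"
  show "w x = w (x + (p - q))"
  proof (cases "x + p \<le> k")
    case True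
    have e1: "w x = w (x + p)" using perD[OF p x(1) True] .
    have "1 \<le> x + (p - q)" "x + (p - q) + q \<le> k" using x True \<open>q < p\<close> by auto
    note e2 = perD[OF q this]
    have eq: "x + (p - q) + q = x + p" using \<open>q < p\<close> by simp
    show ?thesis using e1 e2 eq by metis
  next
    case False
    then have "x > q" using assms by linarith
    have "1 \<le> x - q" "x - q + q \<le> k" using \<open>x > q\<close> x \<open>q < p\<close> by auto
    note e1 = perD[OF q this]
    have "x - q + p \<le> k" using \<open>x > q\<close> x \<open>q < p\<close> by auto
    note e2 = perD[OF p \<open>1 \<le> x - q\<close> this]
    have eq: "x - q + q = x" "x - q + p = x + (p - q)" using \<open>x > q\<close> \<open>q < p\<close> by auto
    show ?thesis using e1 e2 eq by metis
  qed
qed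

lemma per_mult:
  assumes p0: "per w k p0" "1 \<le> p0"
    and minp: "\<And>q. per w k q \<Longrightarrow> 1 \<le> q \<Longrightarrow> q < k \<Longrightarrow> p0 \<le> q"
  shows "per w k p \<Longrightarrow> 1 \<le> p \<Longrightarrow> p + p0 \<le> k \<Longrightarrow> p0 dvd p"
proof (induction p rule: less_induct)
  case (less p)
  have "p0 \<le> p" using minp[OF less.prems(1,2)] less.prems(3) p0(2) by linarith
  show ?case
  proof (cases "p = p0")
    case True then show ?thesis by simp
  next
    case False
    with \<open>p0 \<le> p\<close> have lt: "p0 < p" by simp
    have "per w k (p - p0)" using per_sub[OF less.prems(1) p0(1) lt less.prems(3)] .
    moreover have "p - p0 < p" "1 \<le> p - p0" "p - p0 + p0 \<le> k" using lt less.prems p0 by auto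
    ultimately have "p0 dvd (p - p0)" using less.IH by blast
    then obtain c where "p - p0 = p0 * c" by blast
    hence "p = p0 * (c + 1)" using lt by (simp add: algebra_simps)
    thus ?thesis by simp
  qed
qed

theorem corollary4p1:
  fixes w :: "nat \<Rightarrow> 'a" and k :: nat
  shows "{i \<in> {1..k-1}. bflag w k i} =
         {i \<in> {1..k-1}. bflag w k i \<and> cls w k i = sval w k} \<union> (Iset w k - {sval w k})"
proof -
  define B where "B = {i \<in> {1..k-1}. bflag w k i}"
  define C where "C i = {j \<in> {1..k-1}. bflag w k j \<and>
      (\<exists>t::nat. 1 \<le> t \<and> t \<le> k div (k - j) \<and> int i = int k - int t * (int k - int j))}" for i
  have clsC: "cls w k i = Max (C i)" for i unfolding cls_def C_def by simp
  have finC: "finite (C i)" for i unfolding C_def by auto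
  have iC: "i \<in> C i" if "i \<in> B" for i
  proof -
    have "k - i > 0" "k - i \<le> k" using that unfolding B_def by auto
    then have "1 \<le> k div (k - i)" using div_le_mono[of "k-i" k "k-i"] by simp
    then show ?thesis using that unfolding B_def C_def by (auto intro!: exI[of _ 1])
  qed
  have clsmem: "cls w k i \<in> C i" "i \<le> cls w k i" if "i \<in> B" for i
    using iC[OF that] finC[of i] clsC[of i] by (auto intro: Max_in Max_ge)
  have clsge: "j \<le> cls w k i" if "j \<in> C i" for i j
    using finC[of i] clsC[of i] that by auto
  have CB: "C i \<subseteq> B" for i unfolding C_def B_def by auto
  have finB: "finite B" unfolding B_def by auto
  have sB: "B \<noteq> {} \<Longrightarrow> sval w k = Max B" unfolding sval_def B_def by auto
  have key: "cls w k i = sval w k \<or> cls w k i = i" if iB: "i \<in> B" for i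
  proof (rule ccontr)
    assume ne: "\<not> (cls w k i = sval w k \<or> cls w k i = i)"
    define j where "j = cls w k i"
    define s where "s = sval w k"
    have jC: "j \<in> C i" "i < j" using clsmem[OF iB] ne unfolding j_def by auto
    have jB: "j \<in> B" using jC CB by auto
    have Bne: "B \<noteq> {}" using iB by auto
    have sBm: "s \<in> B" "\<And>x. x \<in> B \<Longrightarrow> x \<le> s" using sB[OF Bne] finB Bne unfolding s_def by auto
    have "j \<le> s" using sBm jB by auto
    with ne have js: "j < s" unfolding j_def s_def by auto
    obtain t where t: "1 \<le> t" "t \<le> k div (k - j)" "int i = int k - int t * (int k - int j)"
      using jC(1) unfolding C_def by auto
    have jk: "1 \<le> j" "j < k" "1 \<le> i" "s < k" using jB iB sBm unfolding B_def by auto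
    have ik: "i < k" using iB unfolding B_def by auto
    have "int (k - i) = int k - int i" "int (k - j) = int k - int j" using ik jk by auto
    hence "int (k - i) = int t * int (k - j)" using t(3) by simp
    hence "int (k - i) = int (t * (k - j))" by (simp only: of_nat_mult)
    hence teq: "k - i = t * (k - j)" by (simp only: of_nat_eq_iff)
    have "t \<noteq> 1"
    proof
      assume "t = 1"
      with teq have "k - i = k - j" by simp
      with jk ik jC(2) show False by linarith
    qed
    with t have t2: "2 \<le> t" by simp
    define p where "p = k - j"
    define p0 where "p0 = k - s"
    have pp: "p0 < p" "1 \<le> p0" using js jk unfolding p_def p0_def by auto
    have "2 * p \<le> t * p" using t2 by (rule mult_le_mono1)
    hence "k - i \<ge> 2 * p" using teq unfolding p_def by simp
    hence psum: "p + p0 \<le> k" using pp jk by linarith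
    have perp: "per w k p" using jB bflag_per[of j k w] jk unfolding B_def p_def by auto
    have perp0: "per w k p0" using sBm(1) bflag_per[of s k w] jk unfolding B_def p0_def by auto
    have minp: "p0 \<le> q" if "per w k q" "1 \<le> q" "q < k" for q
    proof -
      have "k - q \<in> B" using that bflag_per[of "k-q" k w] unfolding B_def by auto
      then have "k - q \<le> s" using sBm by auto
      then show ?thesis unfolding p0_def using that by linarith
    qed
    have "p0 dvd p" using per_mult[OF perp0 pp(2) minp perp] pp psum by auto
    then obtain m where m: "p = p0 * m" by blast
    have kie: "k - i = (t * m) * p0" using teq m unfolding p_def by simp
    have "(t * m) * p0 \<le> k" using kie by (metis diff_le_self)
    hence "(t * m) * p0 div p0 \<le> k div p0" by (rule div_le_mono)
    moreover have "(t * m) * p0 div p0 = t * m" using pp(2) by simp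
    ultimately have "t * m \<le> k div p0" by simp
    moreover have "1 \<le> t * m"
    proof -
      have "k - i > 0" using ik by simp
      hence "t * m * p0 \<noteq> 0" using kie by simp
      hence "t * m \<noteq> 0" by auto
      thus ?thesis by simp
    qed
    moreover have "int i = int k - int (t * m) * (int k - int s)"
    proof -
      have "int (k - i) = int ((t * m) * p0)" using kie by simp
      hence "int (k - i) = int (t * m) * int p0" by (simp only: of_nat_mult)
      moreover have "int (k - i) = int k - int i" "int p0 = int k - int s" using ik jk unfolding p0_def by auto
      ultimately show ?thesis by simp
    qed
    ultimately have "s \<in> C i" using sBm(1) unfolding C_def B_def p0_def
      by (intro CollectI conjI exI[of _ "t*m"]) auto
    then have "s \<le> j" using clsge unfolding j_def by auto
    with js show False by simp
  qed
  have "B = {i \<in> B. cls w k i = sval w k} \<union> (Iset w k - {sval w k})"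
  proof (intro equalityI subsetI)
    fix i assume iB: "i \<in> B"
    show "i \<in> {i \<in> B. cls w k i = sval w k} \<union> (Iset w k - {sval w k})"
    proof (cases "cls w k i = sval w k")
      case True then show ?thesis using iB by auto
    next
      case False
      with key[OF iB] have ci: "cls w k i = i" by simp
      have "i \<in> Iset w k" unfolding Iset_def using iB ci unfolding B_def
        by (intro CollectI exI[of _ i]) simp
      moreover have "i \<noteq> sval w k"
      proof
        assume hs: "i = sval w k"
        have Bne: "B \<noteq> {}" using iB by auto
        have "cls w k i \<in> B" using clsmem(1)[OF iB] CB by blast
        hence "cls w k i \<le> Max B" using finB by (rule Max_ge[rotated])
        hence "cls w k i \<le> i" using sB[OF Bne] hs by simp
        with clsmem(2)[OF iB] False hs show False by simp
      qed
      ultimately show ?thesis by simp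
    qed
  next
    fix i assume "i \<in> {i \<in> B. cls w k i = sval w k} \<union> (Iset w k - {sval w k})"
    then show "i \<in> B"
    proof
      assume "i \<in> Iset w k - {sval w k}"
      then obtain i' where "i' \<in> B" "i = cls w k i'" unfolding Iset_def B_def by auto
      then show ?thesis using clsmem CB by auto
    qed auto
  qed
  moreover have "{i \<in> B. cls w k i = sval w k} = {i \<in> {1..k-1}. bflag w k i \<and> cls w k i = sval w k}"
    unfolding B_def by blast
  ultimately show ?thesis unfolding B_def by (simp only:)
qed

end
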